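(* Let $\mathfrak c:(0,1)\to(0,\infty)$ be any function, $\alpha>0$, $n\ge1$, $p_0\in(1/2,1)$ and $0<\epsilon<p_0-1/2$. Consider two two-armed problem instances with Bernoulli arms: in $\mathcal P_1$, arm 1 is $\mathrm{Ber}(p_0)$ and arm 2 is $\mathrm{Ber}(p_0-\epsilon)$; in $\mathcal P_2$ the arms are swapped. For an instance, let $c_i=\mathfrak c(q_i)$ where $q_i$ is the Bernoulli parameter of arm $i$, and define the approx-oracle allocation for the objective $\varphi(c,T)=c/T^\alpha$ as $\tilde T_i^*\coloneqq n\,c_i^{1/\alpha}/(c_1^{1/\alpha}+c_2^{1/\alpha})$, $i=1,2$. Let $\tau\coloneqq|\tilde T_1^*-n/2|$ computed for $\mathcal P_1$ (it has the same value for $\mathcal P_2$). Then for every adaptive allocation scheme $\mathcal A$ with budget $n$, letting $T_1,T_2$ ($T_1+T_2=n$) be the numbers of samples it allocates to the two arms, $$\max_{\mathcal P\in\{\mathcal P_1,\mathcal P_2\}}\ \max_{i\in\{1,2\}}\ \mathbb E_{\mathcal P}\big[|T_i-\tilde T_i^*|\big]\;\ge\;\frac{\big(1-\epsilon\sqrt{n/(1-p_0)}\big)\,\tau}{2},$$ where $\tilde T_i^*$ is the approx-oracle allocation of the instance $\mathcal P$ under which the expectation is taken.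
   Context: An adaptive allocation scheme with budget $n$ is a sequence of rules that, at each round $t=1,\dots,n$, selects an arm $i\in\{1,2\}$ based on $n$ and the history of selected arms and observations up to round $t-1$; the selected arm then produces an independent draw from its distribution. $\mathbb E_{\mathcal P}$ denotes expectation under the probability measure induced by the scheme and instance $\mathcal P$ on the observations. *)

theory Defs
  imports "HOL-Probability.Probability"
begin

text \<open>A (deterministic) adaptive allocation scheme for budget n is a function
  from histories (lists of (selected arm, observation)) to the next arm in {1,2}.\<close>

type_synonym history = "(nat \<times> bool) list"

primrec run_scheme :: "(history \<Rightarrow> nat) \<Rightarrow> (nat \<Rightarrow> real) \<Rightarrow> nat \<Rightarrow> history pmf" where
  "run_scheme A q 0 = return_pmf []"
| "run_scheme A q (Suc t) =
     bind_pmf (run_scheme A q t) (\<lambda>h.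
       map_pmf (\<lambda>x. h @ [(A h, x)]) (bernoulli_pmf (q (A h))))"

definition num_samples :: "nat \<Rightarrow> history \<Rightarrow> nat" where
  "num_samples i h = length (filter (\<lambda>p. fst p = i) h)"

definition approx_oracle :: "(real \<Rightarrow> real) \<Rightarrow> real \<Rightarrow> nat \<Rightarrow> (nat \<Rightarrow> real) \<Rightarrow> nat \<Rightarrow> real" where
  "approx_oracle cf \<alpha> n q i =
     real n * cf (q i) powr (1/\<alpha>) / (cf (q 1) powr (1/\<alpha>) + cf (q 2) powr (1/\<alpha>))"

end

theory Submission imports Defs begin

primrec HS :: "nat \<Rightarrow> history set" where
  "HS 0 = {[]}"
| "HS (Suc t) = (\<lambda>(h,y). h @ [y]) ` (HS t \<times> ({1,2} \<times> UNIV))"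

lemma finite_HS: "finite (HS t)"
  by (induction t) auto

lemma set_run_HS:
  assumes "\<forall>h. A h \<in> {1,2}"
  shows "set_pmf (run_scheme A q t) \<subseteq> HS t"
  using assms by (induction t) (auto simp: set_bind_pmf)

lemma sum_HS_Suc:
  "(\<Sum>h\<in>HS (Suc t). F h) = (\<Sum>h\<in>HS t. \<Sum>y\<in>{1::nat,2} \<times> (UNIV::bool set). F (h @ [y]))"
proof -
  have inj: "inj_on (\<lambda>(h,y). h @ [y]) (HS t \<times> ({1::nat,2} \<times> (UNIV::bool set)))"
    by (auto simp: inj_on_def)
  have "(\<Sum>h\<in>HS (Suc t). F h) = (\<Sum>p\<in>HS t \<times> ({1::nat,2} \<times> (UNIV::bool set)). F ((\<lambda>(h,y). h @ [y]) p))"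
    by (subst HS.simps, subst sum.reindex[OF inj]) (simp add: comp_def)
  also have "\<dots> = (\<Sum>h\<in>HS t. \<Sum>y\<in>{1::nat,2} \<times> (UNIV::bool set). F (h @ [y]))"
    by (simp add: sum.cartesian_product split_def)
  finally show ?thesis .
qed

lemma pmf_step:
  "pmf (run_scheme A q (Suc t)) (h @ [(a,x)]) =
     pmf (run_scheme A q t) h * (if a = A h then pmf (bernoulli_pmf (q a)) x else 0)"
proof -
  have "pmf (run_scheme A q (Suc t)) (h @ [(a,x)]) =
    (\<integral>h'. (if h' = h then (if a = A h then pmf (bernoulli_pmf (q a)) x else 0) else 0) \<partial>measure_pmf (run_scheme A q t))"
  proof -
    have pt: "measure_pmf.prob (bernoulli_pmf (q (A h'))) ((\<lambda>x. h' @ [(A h', x)]) -` {h @ [(a, x)]})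
       = (if h' = h then (if a = A h then pmf (bernoulli_pmf (q a)) x else 0) else 0)" for h'
    proof (cases "h' = h \<and> a = A h")
      case True
      then have "(\<lambda>x'. h' @ [(A h', x')]) -` {h @ [(a, x)]} = {x}" by auto
      then show ?thesis using True by (simp add: measure_pmf_single)
    next
      case False
      then have "(\<lambda>x'. h' @ [(A h', x')]) -` {h @ [(a, x)]} = {}" by auto
      then show ?thesis using False by auto
    qed
    show ?thesis
      by (simp only: run_scheme.simps pmf_bind pmf_map pt)
  qed
  also have "\<dots> = pmf (run_scheme A q t) h * (if a = A h then pmf (bernoulli_pmf (q a)) x else 0)"
    by (subst integral_measure_pmf_real[where A="{h}"]) (auto split: if_splits)
  finally show ?thesis .
qed

lemma inner_sum:
  assumes "a0 \<in> {1::nat,2}"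
  shows "(\<Sum>y\<in>{1::nat,2} \<times> (UNIV::bool set). (if fst y = a0 then g (fst y) (snd y) else (0::real)))
     = g a0 True + g a0 False"
  using assms by (auto simp: sum.cartesian_product[symmetric] UNIV_bool)

lemma BC_run:
  assumes arms: "\<forall>h. A h \<in> {1,2}"
    and q: "\<And>a. a \<in> {1,2} \<Longrightarrow> 0 \<le> q1 a \<and> q1 a \<le> 1 \<and> 0 \<le> q2 a \<and> q2 a \<le> 1"
    and beta: "\<And>a. a \<in> {1,2} \<Longrightarrow> sqrt (q1 a * q2 a) + sqrt ((1 - q1 a) * (1 - q2 a)) = \<beta>"
  shows "(\<Sum>h\<in>HS t. sqrt (pmf (run_scheme A q1 t) h * pmf (run_scheme A q2 t) h)) = \<beta> ^ t"
proof (induction t)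
  case 0
  then show ?case by simp
next
  case (Suc t)
  let ?p1 = "pmf (run_scheme A q1 t)" and ?p2 = "pmf (run_scheme A q2 t)"
  have "(\<Sum>h\<in>HS (Suc t). sqrt (pmf (run_scheme A q1 (Suc t)) h * pmf (run_scheme A q2 (Suc t)) h))
    = (\<Sum>h\<in>HS t. \<Sum>y\<in>{1::nat,2} \<times> (UNIV::bool set).
         sqrt (pmf (run_scheme A q1 (Suc t)) (h @ [y]) * pmf (run_scheme A q2 (Suc t)) (h @ [y])))"
    by (rule sum_HS_Suc)
  also have "\<dots> = (\<Sum>h\<in>HS t. sqrt (?p1 h * ?p2 h) * (\<Sum>y\<in>{1::nat,2} \<times> (UNIV::bool set).
         (if fst y = A h then sqrt (pmf (bernoulli_pmf (q1 (fst y))) (snd y) * pmf (bernoulli_pmf (q2 (fst y))) (snd y)) else 0)))"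
    unfolding sum_distrib_left
    by (intro sum.cong refl) (auto simp del: run_scheme.simps simp: pmf_step real_sqrt_mult)
  also have "\<dots> = (\<Sum>h\<in>HS t. sqrt (?p1 h * ?p2 h) * \<beta>)"
  proof (intro sum.cong refl)
    fix h assume "h \<in> HS t"
    have a: "A h \<in> {1,2}" using arms by auto
    show "sqrt (?p1 h * ?p2 h) * (\<Sum>y\<in>{1::nat,2} \<times> (UNIV::bool set).
         (if fst y = A h then sqrt (pmf (bernoulli_pmf (q1 (fst y))) (snd y) * pmf (bernoulli_pmf (q2 (fst y))) (snd y)) else 0))
       = sqrt (?p1 h * ?p2 h) * \<beta>"
      using inner_sum[OF a, of "\<lambda>a x. sqrt (pmf (bernoulli_pmf (q1 a)) x * pmf (bernoulli_pmf (q2 a)) x)"]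
        q[OF a] beta[OF a] by (simp add: add.commute)
  qed
  also have "\<dots> = \<beta> ^ Suc t" using Suc by (simp add: sum_distrib_right[symmetric])
  finally show ?case .
qed

lemma lecam:
  fixes p q :: "'a \<Rightarrow> real"
  assumes fin: "finite S" and nn: "\<And>x. 0 \<le> p x" "\<And>x. 0 \<le> q x"
    and s1: "(\<Sum>x\<in>S. p x) = 1" and s2: "(\<Sum>x\<in>S. q x) = 1"
  shows "(\<Sum>x\<in>S. sqrt (p x * q x))^2 \<le> 2 * (\<Sum>x\<in>S. min (p x) (q x))"
proof -
  have e: "sqrt (p x * q x) = sqrt (min (p x) (q x)) * sqrt (max (p x) (q x))" for x
    by (simp add: real_sqrt_mult[symmetric] min_def max_def mult.commute)
  have "(\<Sum>x\<in>S. sqrt (p x * q x))^2 \<le> (\<Sum>x\<in>S. (sqrt (min (p x) (q x)))^2) * (\<Sum>x\<in>S. (sqrt (max (p x) (q x)))^2)"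
    unfolding e by (rule Cauchy_Schwarz_ineq_sum)
  also have "\<dots> = (\<Sum>x\<in>S. min (p x) (q x)) * (\<Sum>x\<in>S. max (p x) (q x))"
  proof -
    have "(sqrt (max (p x) (q x)))^2 = max (p x) (q x)" for x using nn[of x] by (simp add: max_def)
    moreover have "(sqrt (min (p x) (q x)))^2 = min (p x) (q x)" for x using nn[of x] nn(2)[of x] by (simp add: min_def)
    ultimately show ?thesis by simp
  qed
  also have "\<dots> \<le> (\<Sum>x\<in>S. min (p x) (q x)) * 2"
  proof (rule mult_left_mono)
    have "(\<Sum>x\<in>S. max (p x) (q x)) \<le> (\<Sum>x\<in>S. p x + q x)"
      by (rule sum_mono) (use nn in \<open>auto simp: max_def\<close>)
    then show "(\<Sum>x\<in>S. max (p x) (q x)) \<le> 2" using s1 s2 by (simp add: sum.distrib)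
    show "0 \<le> (\<Sum>x\<in>S. min (p x) (q x))" using nn by (intro sum_nonneg) auto
  qed
  finally show ?thesis by simp
qed

lemma beta_bound:
  fixes p q :: real
  assumes "1/2 < q" "q < p" "p < 1"
  shows "sqrt (p * q) + sqrt ((1 - p) * (1 - q)) \<ge> 1 - (p - q)^2 / (4 * (1 - p))"
proof -
  define u where "u = sqrt p" define v where "v = sqrt q"
  define u' where "u' = sqrt (1 - q)" define v' where "v' = sqrt (1 - p)"
  have pos: "u > 0" "v > 0" "u' > 0" "v' > 0" using assms by (auto simp: u_def v_def u'_def v'_def)
  have sq: "u^2 = p" "v^2 = q" "u'^2 = 1 - q" "v'^2 = 1 - p" using assms
    by (auto simp: u_def v_def u'_def v'_def)
  have uv: "u > v" using assms unfolding u_def v_def by auto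
  have uv': "u' > v'" using assms unfolding u'_def v'_def by auto
  have b: "sqrt (p * q) + sqrt ((1 - p) * (1 - q)) = u * v + u' * v'"
    by (simp add: u_def v_def u'_def v'_def real_sqrt_mult mult.commute)
  have x1: "(u - v)^2 = p + q - 2 * (u * v)" using sq by (simp add: power2_diff)
  have x2: "(u' - v')^2 = (1 - q) + (1 - p) - 2 * (u' * v')" using sq by (simp add: power2_diff)
  have key: "u * v + u' * v' = 1 - (u - v)^2 / 2 - (u' - v')^2 / 2" using x1 x2 by (simp add: field_simps)
  have d1: "(u - v)^2 * (u + v)^2 = (p - q)^2"
  proof -
    have "(u - v)^2 * (u + v)^2 = (u^2 - v^2)^2"
      by (simp add: power_mult_distrib[symmetric] power2_eq_square algebra_simps)
    also have "\<dots> = (p - q)^2" using sq by simp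
    finally show ?thesis .
  qed
  have d2: "(u' - v')^2 * (u' + v')^2 = (p - q)^2"
  proof -
    have "(u' - v')^2 * (u' + v')^2 = (u'^2 - v'^2)^2"
      by (simp add: power_mult_distrib[symmetric] power2_eq_square algebra_simps)
    moreover have "u'^2 - v'^2 = p - q" using sq by simp
    ultimately show ?thesis by simp
  qed
  have l1: "(u + v)^2 \<ge> 2"
  proof -
    have "(u + v)^2 \<ge> (2 * v)^2" using pos uv by (intro power_mono) auto
    then show ?thesis using sq assms by (simp add: power_mult_distrib)
  qed
  have l2: "(u' + v')^2 \<ge> 4 * (1 - p)"
  proof -
    have "(u' + v')^2 \<ge> (2 * v')^2" using pos uv' by (intro power_mono) auto
    then show ?thesis using sq by (simp add: power_mult_distrib)
  qed
  have e1: "(u - v)^2 \<le> (p - q)^2 / 2"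
  proof -
    have "(u - v)^2 * 2 \<le> (u - v)^2 * (u + v)^2" using l1 by (intro mult_left_mono) auto
    then show ?thesis using d1 by simp
  qed
  have e2: "(u' - v')^2 \<le> (p - q)^2 / (4 * (1 - p))"
  proof -
    have "(u' - v')^2 * (4 * (1 - p)) \<le> (u' - v')^2 * (u' + v')^2" using l2 by (intro mult_left_mono) auto
    then show ?thesis using d2 assms by (simp add: pos_le_divide_eq)
  qed
  have e3: "(p - q)^2 / 2 \<le> (p - q)^2 / (4 * (1 - p))"
    using assms by (intro divide_left_mono) auto
  show ?thesis using b key e1 e2 e3 by linarith
qed

lemma pow_bound:
  fixes \<beta> \<eta> \<delta> :: real and n :: nat
  assumes b0: "0 \<le> \<beta>" and b: "\<beta> \<ge> 1 - \<eta>" and eta: "0 \<le> \<eta>" and d: "\<delta> \<ge> 0" and dd: "\<delta>^2 = 4 * real n * \<eta>"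
    and n: "n \<ge> 1"
  shows "\<beta> ^ (2 * n) \<ge> 1 - \<delta>"
proof (cases "\<delta> \<ge> 1")
  case True
  then show ?thesis proof -
    have "0 \<le> \<beta> ^ (2 * n)" using b0 by simp
    then show ?thesis using True by linarith
  qed
next
  case False
  have dle: "\<delta> * \<delta> \<le> \<delta> * 1" using d False by (intro mult_left_mono) auto
  then have "\<delta>^2 < 1" using False by (simp add: power2_eq_square)
  then have "4 * real n * \<eta> < 1" using dd by simp
  moreover have "real n \<ge> 1" using n by simp
  moreover have "1 * \<eta> \<le> real n * \<eta>" using n eta by (intro mult_right_mono) auto
  ultimately have eta1: "\<eta> < 1/4" by linarith
  have "\<beta>^2 \<ge> (1 - \<eta>)^2" using b eta1 by (intro power_mono) auto
  moreover have "(1 - \<eta>)^2 \<ge> 1 - 2 * \<eta>" by (simp add: power2_diff)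
  ultimately have bb: "\<beta>^2 \<ge> 1 + (- 2 * \<eta>)" by simp
  have "(\<beta>^2)^n \<ge> (1 + (- 2 * \<eta>))^n" using bb eta1 by (intro power_mono) auto
  moreover have "(1 + (- 2 * \<eta>))^n \<ge> 1 + real n * (- 2 * \<eta>)"
    by (rule Bernoulli_inequality) (use eta1 in auto)
  moreover have "1 + real n * (- 2 * \<eta>) = 1 - \<delta>^2 / 2" using dd by simp
  moreover have "\<delta>^2 / 2 \<le> \<delta>" using dle d by (simp add: power2_eq_square)
  ultimately show ?thesis by (simp add: power_mult)
qed


theorem mainTheorem7:
  fixes cf :: "real \<Rightarrow> real" and \<alpha> p0 \<epsilon> :: real and n :: nat
    and A :: "history \<Rightarrow> nat"
  assumes cf_pos: "\<forall>x\<in>{0<..<1}. cf x > 0"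
    and \<alpha>_pos: "\<alpha> > 0"
    and n_pos: "n \<ge> 1"
    and p0: "1/2 < p0" "p0 < 1"
    and \<epsilon>: "0 < \<epsilon>" "\<epsilon> < p0 - 1/2"
    and A_arms: "\<forall>h. A h \<in> {1, 2}"
  defines "P1 \<equiv> (\<lambda>i::nat. if i = 1 then p0 else p0 - \<epsilon>)"
    and "P2 \<equiv> (\<lambda>i::nat. if i = 1 then p0 - \<epsilon> else p0)"
    and "\<tau> \<equiv> \<bar>approx_oracle cf \<alpha> n (\<lambda>i::nat. if i = 1 then p0 else p0 - \<epsilon>) 1 - real n / 2\<bar>"
    and "E \<equiv> (\<lambda>P i. measure_pmf.expectation (run_scheme A P n)
                 (\<lambda>h. \<bar>real (num_samples i h) - approx_oracle cf \<alpha> n P i\<bar>))"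
  shows "max (max (E P1 1) (E P1 2)) (max (E P2 1) (E P2 2))
           \<ge> (1 - \<epsilon> * sqrt (real n / (1 - p0))) * \<tau> / 2"
proof -
  define S where "S = HS n"
  define p1 where "p1 = pmf (run_scheme A P1 n)"
  define p2 where "p2 = pmf (run_scheme A P2 n)"
  define \<beta> where "\<beta> = sqrt (p0 * (p0 - \<epsilon>)) + sqrt ((1 - p0) * (1 - (p0 - \<epsilon>)))"
  define \<eta> where "\<eta> = (p0 - (p0 - \<epsilon>))^2 / (4 * (1 - p0))"
  define \<delta> where "\<delta> = \<epsilon> * sqrt (real n / (1 - p0))"
  define a where "a = approx_oracle cf \<alpha> n P1 1"
  define b where "b = approx_oracle cf \<alpha> n P2 1"
  define T where "T = (\<lambda>h. real (num_samples 1 h))"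
  have finS: "finite S" unfolding S_def by (rule finite_HS)
  have supp1: "set_pmf (run_scheme A P1 n) \<subseteq> S" unfolding S_def using set_run_HS A_arms by blast
  have supp2: "set_pmf (run_scheme A P2 n) \<subseteq> S" unfolding S_def using set_run_HS A_arms by blast
  have qr: "\<And>a. a \<in> {1,2} \<Longrightarrow> 0 \<le> P1 a \<and> P1 a \<le> 1 \<and> 0 \<le> P2 a \<and> P2 a \<le> 1"
    using p0 \<epsilon> by (auto simp: P1_def P2_def)
  have qb: "\<And>a. a \<in> {1,2} \<Longrightarrow> sqrt (P1 a * P2 a) + sqrt ((1 - P1 a) * (1 - P2 a)) = \<beta>"
    by (auto simp: P1_def P2_def \<beta>_def mult.commute)
  have BC: "(\<Sum>h\<in>S. sqrt (p1 h * p2 h)) = \<beta> ^ n"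
    unfolding S_def p1_def p2_def by (rule BC_run[OF A_arms qr qb])
  have s1: "(\<Sum>h\<in>S. p1 h) = 1" unfolding p1_def by (rule sum_pmf_eq_1[OF finS supp1])
  have s2: "(\<Sum>h\<in>S. p2 h) = 1" unfolding p2_def by (rule sum_pmf_eq_1[OF finS supp2])
  have LC: "(\<beta> ^ n)^2 \<le> 2 * (\<Sum>h\<in>S. min (p1 h) (p2 h))"
    using lecam[OF finS _ _ s1 s2] BC by (simp add: p1_def p2_def)
  have b0: "0 \<le> \<beta>" unfolding \<beta>_def using p0 \<epsilon> by (intro add_nonneg_nonneg real_sqrt_ge_zero mult_nonneg_nonneg) auto
  have bb: "\<beta> \<ge> 1 - \<eta>" unfolding \<beta>_def \<eta>_def
    by (rule beta_bound) (use p0 \<epsilon> in auto)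
  have eta0: "0 \<le> \<eta>" unfolding \<eta>_def using p0 by simp
  have d0: "0 \<le> \<delta>" unfolding \<delta>_def using p0 \<epsilon> by simp
  have dd: "\<delta>^2 = 4 * real n * \<eta>"
    unfolding \<delta>_def \<eta>_def using p0 by (simp add: power_mult_distrib field_simps)
  have PB: "\<beta> ^ (2 * n) \<ge> 1 - \<delta>" by (rule pow_bound[OF b0 bb eta0 d0 dd n_pos])
  have minS: "(\<Sum>h\<in>S. min (p1 h) (p2 h)) \<ge> (1 - \<delta>) / 2"
    using LC PB by (simp add: power_mult[symmetric] mult.commute)
  have c1: "cf p0 > 0" using cf_pos p0 by auto
  have c2: "cf (p0 - \<epsilon>) > 0" using cf_pos p0 \<epsilon> by auto
  define X where "X = cf p0 powr (1/\<alpha>)"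
  define Y where "Y = cf (p0 - \<epsilon>) powr (1/\<alpha>)"
  have X0: "X > 0" unfolding X_def using c1 by simp
  have Y0: "Y > 0" unfolding Y_def using c2 by simp
  have aeq: "a = real n * X / (X + Y)"
    unfolding a_def approx_oracle_def P1_def X_def Y_def by simp
  have beq: "b = real n * Y / (Y + X)"
    unfolding b_def approx_oracle_def P2_def X_def Y_def by simp
  have XY: "X + Y \<noteq> 0" using X0 Y0 by simp
  have ab: "a + b = real n"
  proof -
    have "a + b = (real n * X + real n * Y) / (X + Y)"
      unfolding aeq beq by (simp add: add.commute[of Y X] add_divide_distrib)
    also have "\<dots> = real n * (X + Y) / (X + Y)" by (simp add: distrib_left)
    also have "\<dots> = real n" using XY by simp
    finally show ?thesis .
  qed
  have tau: "\<tau> = \<bar>a - real n / 2\<bar>" unfolding \<tau>_def a_def P1_def by simp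
  have tau0: "\<tau> \<ge> 0" unfolding tau by simp
  have E1: "E P1 1 = (\<Sum>h\<in>S. \<bar>T h - a\<bar> * p1 h)"
    unfolding E_def T_def a_def p1_def
    by (rule integral_measure_pmf_real[OF finS]) (use supp1 in auto)
  have E2: "E P2 1 = (\<Sum>h\<in>S. \<bar>T h - b\<bar> * p2 h)"
    unfolding E_def T_def b_def p2_def
    by (rule integral_measure_pmf_real[OF finS]) (use supp2 in auto)
  have "E P1 1 + E P2 1 \<ge> (\<Sum>h\<in>S. min (p1 h) (p2 h) * (2 * \<tau>))"
    unfolding E1 E2 sum.distrib[symmetric]
  proof (rule sum_mono)
    fix h assume "h \<in> S"
    have n1: "0 \<le> p1 h" "0 \<le> p2 h" unfolding p1_def p2_def by auto
    have tri: "2 * \<tau> \<le> \<bar>T h - a\<bar> + \<bar>T h - b\<bar>" unfolding tau using ab by (simp add: abs_if split: if_splits)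
    have "min (p1 h) (p2 h) * (2 * \<tau>) \<le> min (p1 h) (p2 h) * (\<bar>T h - a\<bar> + \<bar>T h - b\<bar>)"
      using tri n1 by (intro mult_left_mono) auto
    also have "\<dots> \<le> \<bar>T h - a\<bar> * p1 h + \<bar>T h - b\<bar> * p2 h"
    proof -
      have "min (p1 h) (p2 h) * \<bar>T h - a\<bar> \<le> p1 h * \<bar>T h - a\<bar>"
        by (intro mult_right_mono) auto
      moreover have "min (p1 h) (p2 h) * \<bar>T h - b\<bar> \<le> p2 h * \<bar>T h - b\<bar>"
        by (intro mult_right_mono) auto
      ultimately show ?thesis by (simp add: distrib_left mult.commute)
    qed
    finally show "min (p1 h) (p2 h) * (2 * \<tau>) \<le> \<bar>T h - a\<bar> * p1 h + \<bar>T h - b\<bar> * p2 h" .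
  qed
  also have "(\<Sum>h\<in>S. min (p1 h) (p2 h) * (2 * \<tau>)) = (\<Sum>h\<in>S. min (p1 h) (p2 h)) * (2 * \<tau>)"
    by (simp add: sum_distrib_right)
  finally have sumE: "E P1 1 + E P2 1 \<ge> (\<Sum>h\<in>S. min (p1 h) (p2 h)) * (2 * \<tau>)" .
  have "(1 - \<delta>) / 2 * (2 * \<tau>) \<le> (\<Sum>h\<in>S. min (p1 h) (p2 h)) * (2 * \<tau>)"
    using minS tau0 by (intro mult_right_mono) auto
  then have "(1 - \<delta>) * \<tau> \<le> E P1 1 + E P2 1" using sumE by simp
  then have "(1 - \<delta>) * \<tau> / 2 \<le> max (max (E P1 1) (E P1 2)) (max (E P2 1) (E P2 2))"
    by linarith
  then show ?thesis unfolding \<delta>_def .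
qed

end
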